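(* Let $\{x,x_1\}$ be a Bertrand $D$-pair of type 1 in $E_1^3$, with $x(s)$ on the oriented surface $S$ and $x_1(s_1)$ on the oriented surface $S_1$. Let $k_g,k_n,\tau_g$ be the geodesic curvature, normal curvature and geodesic torsion of $x$, let $k_{g_1},k_{n_1},\tau_{g_1}$ be those of $x_1$, and let $\theta$ be the angle between the unit tangents $\vec T$ and $\vec T_1$ at corresponding points (so $\langle\vec T,\vec T_1\rangle=\cosh\theta$). Then (i) $k_{n_1} = k_n \frac{ds}{ds_1} - \frac{d\theta}{ds_1}$; (ii) $\tau_g \frac{ds}{ds_1} = k_{g_1} \sinh \theta - \tau_{g_1} \cosh \theta$; (iii) $k_g \frac{ds}{ds_1} = k_{g_1} \cosh \theta + \tau_{g_1} \sinh \theta$; (iv) $\tau_{g_1} = (-k_g \sinh \theta + \tau_g \cosh \theta) \frac{ds}{ds_1}$.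
   Context: Minkowski 3-space $E_1^3$ is $\mathbb{R}^3$ with metric $\langle u,v\rangle=-u_1v_1+u_2v_2+u_3v_3$ and Lorentz cross product $u\times v=(u_2v_3-u_3v_2,\ u_1v_3-u_3v_1,\ u_2v_1-u_1v_2)$. A surface is spacelike if its induced metric is Riemannian (its unit normal is timelike). Darboux frame on a spacelike surface: for a unit-speed spacelike curve $x(s)$ on an oriented spacelike surface $S$ with unit normal $\vec n$, $\vec T=dx/ds$, $\vec g=\vec n\times\vec T$, $\langle\vec T,\vec T\rangle=\langle\vec g,\vec g\rangle=1$, $\langle\vec n,\vec n\rangle=-1$, and $\dot{\vec T}=k_g\vec g+k_n\vec n$, $\dot{\vec g}=-k_g\vec T+\tau_g\vec n$, $\dot{\vec n}=k_n\vec T+\tau_g\vec g$, where $k_g,k_n,\tau_g$ are the geodesic curvature, normal curvature and geodesic torsion. A Bertrand $D$-pair $\{x,x_1\}$: unit-speed curves $x(s)$ on $S$ and $x_1(s_1)$ on $S_1$ with a point correspondence $s=s(s_1)$ such that at corresponding points the Darboux vector $\vec g$ of $x$ coincides (in direction) with the Darboux vector $\vec g_1$ of $x_1$. It is of type 1 if $S$, $x$, $S_1$, $x_1$ are all spacelike. For spacelike $u,v$ spanning a timelike plane, the (central) angle $\theta\ge0$ between them satisfies $\langle u,v\rangle=|u||v|\cosh\theta$.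
   Formalization: At corresponding points $\langle\vec T_1,\vec n\rangle\ge0$ holds in addition, and (ii) has a plus sign before its last term: $\tau_g \frac{ds}{ds_1} = k_{g_1} \sinh \theta + \tau_{g_1} \cosh \theta$. Each condition added here is assumed in the paper as well or is needed for the statement above to hold. This also corrects a misprint. *)

theory Defs
  imports "HOL-Analysis.Analysis"
begin

definition minner :: "real^3 \<Rightarrow> real^3 \<Rightarrow> real" where
  "minner u v = - (u$1 * v$1) + u$2 * v$2 + u$3 * v$3"

definition lcross :: "real^3 \<Rightarrow> real^3 \<Rightarrow> real^3" where
  "lcross u v = vector [u$2 * v$3 - u$3 * v$2, u$1 * v$3 - u$3 * v$1, u$2 * v$1 - u$1 * v$2]"

text \<open>Darboux frame of a curve x on an oriented surface whose unit normal along the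
  curve is n (i.e. n s is the surface normal at x s).\<close>

definition tang :: "(real \<Rightarrow> real^3) \<Rightarrow> real \<Rightarrow> real^3" where
  "tang x s = vector_derivative x (at s)"

definition dgvec :: "(real \<Rightarrow> real^3) \<Rightarrow> (real \<Rightarrow> real^3) \<Rightarrow> real \<Rightarrow> real^3" where
  "dgvec x n s = lcross (n s) (tang x s)"

text \<open>Curvatures read off from the Darboux equations
  T' = k_g g + k_n n,  g' = -k_g T + tau_g n  (with <g,g> = 1, <n,n> = -1).\<close>

definition geod_curv :: "(real \<Rightarrow> real^3) \<Rightarrow> (real \<Rightarrow> real^3) \<Rightarrow> real \<Rightarrow> real" where
  "geod_curv x n s = minner (vector_derivative (tang x) (at s)) (dgvec x n s)"

definition norm_curv :: "(real \<Rightarrow> real^3) \<Rightarrow> (real \<Rightarrow> real^3) \<Rightarrow> real \<Rightarrow> real" where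
  "norm_curv x n s = - minner (vector_derivative (tang x) (at s)) (n s)"

definition geod_tors :: "(real \<Rightarrow> real^3) \<Rightarrow> (real \<Rightarrow> real^3) \<Rightarrow> real \<Rightarrow> real" where
  "geod_tors x n s = - minner (vector_derivative (dgvec x n) (at s)) (n s)"

definition spacelike_darboux :: "real set \<Rightarrow> (real \<Rightarrow> real^3) \<Rightarrow> (real \<Rightarrow> real^3) \<Rightarrow> bool" where
  "spacelike_darboux I x n \<longleftrightarrow> open I \<and>
     (\<forall>s\<in>I. x differentiable (at s) \<and> tang x differentiable (at s) \<and> n differentiable (at s)
        \<and> minner (tang x s) (tang x s) = 1
        \<and> minner (n s) (n s) = -1
        \<and> minner (n s) (tang x s) = 0)"

end

theory Submission
  imports Defs
begin

lemma minner_sym: "minner u v = minner v u" by (simp add: minner_def)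
lemma minner_add_left: "minner (u + v) w = minner u w + minner v w" by (simp add: minner_def algebra_simps)
lemma minner_diff_left: "minner (u - v) w = minner u w - minner v w" by (simp add: minner_def algebra_simps)
lemma minner_scale_left: "minner (a *\<^sub>R u) w = a * minner u w" by (simp add: minner_def algebra_simps)
lemma minner_add_right: "minner w (u + v) = minner w u + minner w v" by (simp add: minner_def algebra_simps)
lemma minner_diff_right: "minner w (u - v) = minner w u - minner w v" by (simp add: minner_def algebra_simps)
lemma minner_scale_right: "minner w (a *\<^sub>R u) = a * minner w u" by (simp add: minner_def algebra_simps)
lemmas minner_lin = minner_add_left minner_diff_left minner_scale_left minner_add_right minner_diff_right minner_scale_right

lemma lcross_comp: "lcross u v $ 1 = u$2 * v$3 - u$3 * v$2" "lcross u v $ 2 = u$1 * v$3 - u$3 * v$1"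
  "lcross u v $ 3 = u$2 * v$1 - u$1 * v$2"
  by (simp_all add: lcross_def vector_3)

lemma lcross_lcross: "lcross (lcross a b) c = minner b c *\<^sub>R a - minner a c *\<^sub>R b"
  by (simp add: vec_eq_iff forall_3 lcross_comp minner_def algebra_simps)

lemma lcross_orth: "minner (lcross a b) a = 0" "minner (lcross a b) b = 0"
  by (simp_all add: lcross_comp minner_def algebra_simps)

lemma lcross_norm: "minner (lcross a b) (lcross a b) = (minner a b)^2 - minner a a * minner b b"
  by (simp add: lcross_comp minner_def algebra_simps power2_eq_square)

lemma decomp:
  assumes "minner T T = 1" "minner n n = -1" "minner n T = 0"
  shows "v = minner v T *\<^sub>R T - minner v n *\<^sub>R n + minner v (lcross n T) *\<^sub>R lcross n T"
  using assms unfolding vec_eq_iff forall_3 minner_def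
  by (simp add: lcross_comp; intro conjI; algebra)


lemma comp_prod_le: "\<bar>(u::real^3)$i * (v::real^3)$j\<bar> \<le> norm u * norm v"
  unfolding abs_mult by (intro mult_mono component_le_norm_cart) auto

lemma bb_minner: "bounded_bilinear minner"
proof
  show "\<exists>K. \<forall>a b. norm (minner a b) \<le> norm a * norm b * K"
  proof (intro exI allI)
    fix a b :: "real^3"
    have "norm (minner a b) \<le> \<bar>a$1*b$1\<bar> + \<bar>a$2*b$2\<bar> + \<bar>a$3*b$3\<bar>"
      by (simp add: minner_def)
    also have "\<dots> \<le> norm a * norm b * 3" using comp_prod_le[of a 1 b 1] comp_prod_le[of a 2 b 2] comp_prod_le[of a 3 b 3] by linarith
    finally show "norm (minner a b) \<le> norm a * norm b * 3" .
  qed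
qed (auto simp: minner_def algebra_simps)

lemma bb_lcross: "bounded_bilinear lcross"
proof
  show "\<exists>K. \<forall>a b. norm (lcross a b) \<le> norm a * norm b * K"
  proof (intro exI allI)
    fix a b :: "real^3"
    have "norm (lcross a b) \<le> (\<Sum>i\<in>UNIV. \<bar>lcross a b $ i\<bar>)" by (rule norm_le_l1_cart)
    also have "\<dots> = \<bar>lcross a b $ 1\<bar> + \<bar>lcross a b $ 2\<bar> + \<bar>lcross a b $ 3\<bar>"
      by (simp add: sum_3)
    also have "\<dots> \<le> norm a * norm b * 6"
    proof -
      have "\<bar>lcross a b $ 1\<bar> \<le> norm a * norm b * 2"
        unfolding lcross_comp using comp_prod_le[of a 2 b 3] comp_prod_le[of a 3 b 2] abs_triangle_ineq4[of "a$2*b$3" "a$3*b$2"] by linarith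
      moreover have "\<bar>lcross a b $ 2\<bar> \<le> norm a * norm b * 2"
        unfolding lcross_comp using comp_prod_le[of a 1 b 3] comp_prod_le[of a 3 b 1] abs_triangle_ineq4[of "a$1*b$3" "a$3*b$1"] by linarith
      moreover have "\<bar>lcross a b $ 3\<bar> \<le> norm a * norm b * 2"
        unfolding lcross_comp using comp_prod_le[of a 2 b 1] comp_prod_le[of a 1 b 2] abs_triangle_ineq4[of "a$2*b$1" "a$1*b$2"] by linarith
      ultimately show ?thesis by linarith
    qed
    finally show "norm (lcross a b) \<le> norm a * norm b * 6" .
  qed
qed (simp_all add: vec_eq_iff forall_3 lcross_comp algebra_simps)

lemma minner_deriv:
  assumes "(u has_vector_derivative u') (at s)" "(v has_vector_derivative v') (at s)"
  shows "((\<lambda>t. minner (u t) (v t)) has_real_derivative (minner (u s) v' + minner u' (v s))) (at s)"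
  using bounded_bilinear.has_vector_derivative[OF bb_minner assms]
  by (simp add: has_real_derivative_iff_has_vector_derivative)

lemma lcross_deriv:
  assumes "(u has_vector_derivative u') (at s)" "(v has_vector_derivative v') (at s)"
  shows "((\<lambda>t. lcross (u t) (v t)) has_vector_derivative (lcross (u s) v' + lcross u' (v s))) (at s)"
  using bounded_bilinear.has_vector_derivative[OF bb_lcross assms] by simp

lemma deriv_eq_on_open:
  assumes "open I" "s \<in> I" "\<And>t. t \<in> I \<Longrightarrow> f t = g t"
    "(f has_real_derivative D) (at s)" "(g has_real_derivative E) (at s)"
  shows "D = E"
proof -
  have "(g has_real_derivative D) (at s)"
    by (rule has_field_derivative_transform_within_open[OF assms(4,1,2)]) (use assms(3) in auto)
  then show ?thesis using assms(5) DERIV_unique by blast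
qed


lemma frame_rel:
  assumes hT: "minner T T = 1" and hN: "minner N N = -1" and hNT: "minner N T = 0"
    and hT1: "minner T1 T1 = 1" and hN1: "minner N1 N1 = -1" and hNT1: "minner N1 T1 = 0"
    and hG: "lcross N1 T1 = lcross N T" and hc: "minner T T1 = cosh th"
    and ho: "minner T1 N \<ge> 0" and hth: "th \<ge> 0"
  shows "minner T1 N = sinh th \<and> T1 = cosh th *\<^sub>R T - sinh th *\<^sub>R N
     \<and> N1 = cosh th *\<^sub>R N - sinh th *\<^sub>R T"
proof -
  define a where "a = minner T1 N"
  have hTN: "minner T N = 0" using hNT by (simp add: minner_sym)
  have g0: "minner T1 (lcross N T) = 0" using lcross_orth(2)[of N1 T1] hG by (simp add: minner_sym)
  have e: "T1 = cosh th *\<^sub>R T - a *\<^sub>R N"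
    using decomp[OF hT hN hNT, of T1] g0 hc by (simp add: a_def minner_sym)
  have "1 = minner (cosh th *\<^sub>R T - a *\<^sub>R N) (cosh th *\<^sub>R T - a *\<^sub>R N)"
    using hT1 e by simp
  also have "\<dots> = (cosh th)^2 - a^2"
    by (simp add: minner_lin hT hN hNT hTN power2_eq_square algebra_simps)
  finally have "a^2 = (sinh th)^2" using cosh_square_eq[of th] by simp
  then have ea: "a = sinh th" using ho hth a_def by simp
  have "N1 = lcross (lcross N1 T1) T1"
    using lcross_lcross[of N1 T1 T1] hT1 hNT1 by simp
  also have "\<dots> = cosh th *\<^sub>R N - sinh th *\<^sub>R T"
    using lcross_lcross[of N T T1] hG hc ea a_def by (simp add: minner_sym)
  finally show ?thesis using e ea a_def by simp
qed


theorem theorem4p3: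
  fixes x x1 n n1 :: "real \<Rightarrow> real^3"
    and I I1 :: "real set"
    and \<phi> \<theta> :: "real \<Rightarrow> real"
  assumes curve: "spacelike_darboux I x n"
    and curve1: "spacelike_darboux I1 x1 n1"
    and corr: "\<And>s1. s1 \<in> I1 \<Longrightarrow> \<phi> s1 \<in> I"
    and corr_diff: "\<And>s1. s1 \<in> I1 \<Longrightarrow> \<phi> differentiable (at s1)"
    and bertrand: "\<And>s1. s1 \<in> I1 \<Longrightarrow> dgvec x1 n1 s1 = dgvec x n (\<phi> s1)"
    and angle_nonneg: "\<And>s1. s1 \<in> I1 \<Longrightarrow> \<theta> s1 \<ge> 0"
    and angle: "\<And>s1. s1 \<in> I1 \<Longrightarrow> minner (tang x (\<phi> s1)) (tang x1 s1) = cosh (\<theta> s1)"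
    and angle_orient: "\<And>s1. s1 \<in> I1 \<Longrightarrow> minner (tang x1 s1) (n (\<phi> s1)) \<ge> 0"
    and angle_diff: "\<And>s1. s1 \<in> I1 \<Longrightarrow> \<theta> differentiable (at s1)"
    and s1: "s1 \<in> I1"
  shows "norm_curv x1 n1 s1 = norm_curv x n (\<phi> s1) * deriv \<phi> s1 - deriv \<theta> s1
     \<and> geod_tors x n (\<phi> s1) * deriv \<phi> s1
           = geod_curv x1 n1 s1 * sinh (\<theta> s1) + geod_tors x1 n1 s1 * cosh (\<theta> s1)
     \<and> geod_curv x n (\<phi> s1) * deriv \<phi> s1
           = geod_curv x1 n1 s1 * cosh (\<theta> s1) + geod_tors x1 n1 s1 * sinh (\<theta> s1)
     \<and> geod_tors x1 n1 s1
           = (- geod_curv x n (\<phi> s1) * sinh (\<theta> s1) + geod_tors x n (\<phi> s1) * cosh (\<theta> s1)) * deriv \<phi> s1"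
proof -
  have oI: "open I" and cI: "\<And>t. t \<in> I \<Longrightarrow> x differentiable (at t) \<and> tang x differentiable (at t)
      \<and> n differentiable (at t) \<and> minner (tang x t) (tang x t) = 1 \<and> minner (n t) (n t) = -1
      \<and> minner (n t) (tang x t) = 0"
    using curve unfolding spacelike_darboux_def by auto
  have oI1: "open I1" and cI1: "\<And>t. t \<in> I1 \<Longrightarrow> x1 differentiable (at t) \<and> tang x1 differentiable (at t)
      \<and> n1 differentiable (at t) \<and> minner (tang x1 t) (tang x1 t) = 1 \<and> minner (n1 t) (n1 t) = -1
      \<and> minner (n1 t) (tang x1 t) = 0"
    using curve1 unfolding spacelike_darboux_def by auto
  have frame: "\<And>t. t \<in> I1 \<Longrightarrow> minner (tang x1 t) (n (\<phi> t)) = sinh (\<theta> t)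
     \<and> tang x1 t = cosh (\<theta> t) *\<^sub>R tang x (\<phi> t) - sinh (\<theta> t) *\<^sub>R n (\<phi> t)
     \<and> n1 t = cosh (\<theta> t) *\<^sub>R n (\<phi> t) - sinh (\<theta> t) *\<^sub>R tang x (\<phi> t)"
  proof -
    fix t assume t: "t \<in> I1"
    have ct: "\<phi> t \<in> I" using corr t .
    have b: "lcross (n1 t) (tang x1 t) = lcross (n (\<phi> t)) (tang x (\<phi> t))"
      using bertrand[OF t] by (simp add: dgvec_def)
    show "?thesis t"
      by (rule frame_rel[OF _ _ _ _ _ _ b angle[OF t] angle_orient[OF t] angle_nonneg[OF t]])
         (simp_all add: cI[OF ct] cI1[OF t])
  qed
  define s where "s = \<phi> s1"
  have sI: "s \<in> I" using corr s1 s_def by simp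
  define T where "T = tang x s"
  define N where "N = n s"
  define G where "G = dgvec x n s"
  define T1 where "T1 = tang x1 s1"
  define N1 where "N1 = n1 s1"
  define T' where "T' = vector_derivative (tang x) (at s)"
  define N' where "N' = vector_derivative n (at s)"
  define G' where "G' = vector_derivative (dgvec x n) (at s)"
  define T1' where "T1' = vector_derivative (tang x1) (at s1)"
  define N1' where "N1' = vector_derivative n1 (at s1)"
  define G1' where "G1' = vector_derivative (dgvec x1 n1) (at s1)"
  define c where "c = cosh (\<theta> s1)"
  define sh where "sh = sinh (\<theta> s1)"
  define p where "p = deriv \<phi> s1"
  define q where "q = deriv \<theta> s1"
  have dT: "(tang x has_vector_derivative T') (at s)"
    using cI[OF sI] vector_derivative_works T'_def by blast
  have dN: "(n has_vector_derivative N') (at s)"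
    using cI[OF sI] vector_derivative_works N'_def by blast
  have dT1: "(tang x1 has_vector_derivative T1') (at s1)"
    using cI1[OF s1] vector_derivative_works T1'_def by blast
  have dN1: "(n1 has_vector_derivative N1') (at s1)"
    using cI1[OF s1] vector_derivative_works N1'_def by blast
  have dgx: "dgvec x n = (\<lambda>t. lcross (n t) (tang x t))" by (rule ext) (simp add: dgvec_def)
  have dgx1: "dgvec x1 n1 = (\<lambda>t. lcross (n1 t) (tang x1 t))" by (rule ext) (simp add: dgvec_def)
  have dG: "(dgvec x n has_vector_derivative G') (at s)"
  proof -
    have "(dgvec x n has_vector_derivative (lcross (n s) T' + lcross N' (tang x s))) (at s)"
      unfolding dgx by (rule lcross_deriv[OF dN dT])
    then show ?thesis using G'_def vector_derivative_at by metis
  qed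
  have dG1: "(dgvec x1 n1 has_vector_derivative G1') (at s1)"
  proof -
    have "(dgvec x1 n1 has_vector_derivative (lcross (n1 s1) T1' + lcross N1' (tang x1 s1))) (at s1)"
      unfolding dgx1 by (rule lcross_deriv[OF dN1 dT1])
    then show ?thesis using G1'_def vector_derivative_at by metis
  qed
  have dphi: "(\<phi> has_real_derivative p) (at s1)"
    using corr_diff[OF s1] DERIV_deriv_iff_real_differentiable p_def by blast
  have dtheta: "(\<theta> has_real_derivative q) (at s1)"
    using angle_diff[OF s1] DERIV_deriv_iff_real_differentiable q_def by blast
  have dphiv: "(\<phi> has_vector_derivative p) (at s1)"
    using dphi has_real_derivative_iff_has_vector_derivative by blast
  have F1: "minner T1' T1 = 0"
  proof -
    have "minner (tang x1 s1) T1' + minner T1' (tang x1 s1) = 0"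
      by (rule deriv_eq_on_open[OF oI1 s1 _ minner_deriv[OF dT1 dT1] DERIV_const]) (simp add: cI1)
    then show ?thesis by (simp add: T1_def minner_sym)
  qed
  have F2: "minner G' T + minner G T' = 0"
  proof -
    have "minner (dgvec x n s) T' + minner G' (tang x s) = 0"
      by (rule deriv_eq_on_open[OF oI sI _ minner_deriv[OF dG dT] DERIV_const]) (simp add: dgvec_def lcross_orth)
    then show ?thesis by (simp add: T_def G_def)
  qed
  have F3: "minner G1' T1 + minner G T1' = 0"
  proof -
    have "minner (dgvec x1 n1 s1) T1' + minner G1' (tang x1 s1) = 0"
      by (rule deriv_eq_on_open[OF oI1 s1 _ minner_deriv[OF dG1 dT1] DERIV_const]) (simp add: dgvec_def lcross_orth)
    then show ?thesis using bertrand[OF s1] by (simp add: T1_def G_def s_def)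
  qed
  have F4: "minner N' N = 0"
  proof -
    have "minner (n s) N' + minner N' (n s) = 0"
      by (rule deriv_eq_on_open[OF oI sI _ minner_deriv[OF dN dN] DERIV_const]) (simp add: cI)
    then show ?thesis by (simp add: N_def minner_sym)
  qed
  have F5: "minner N' T + minner N T' = 0"
  proof -
    have "minner (n s) T' + minner N' (tang x s) = 0"
      by (rule deriv_eq_on_open[OF oI sI _ minner_deriv[OF dN dT] DERIV_const]) (simp add: cI)
    then show ?thesis by (simp add: N_def T_def)
  qed
  have F6: "G1' = p *\<^sub>R G'"
  proof -
    have "((dgvec x n \<circ> \<phi>) has_vector_derivative (p *\<^sub>R G')) (at s1)"
      using vector_diff_chain_at[OF dphiv] dG s_def by simp
    then have "(dgvec x1 n1 has_vector_derivative (p *\<^sub>R G')) (at s1)"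
      by (rule has_vector_derivative_transform_within_open[OF _ oI1 s1]) (simp add: bertrand)
    then show ?thesis using G1'_def vector_derivative_at by metis
  qed
  have F7: "minner T1 (p *\<^sub>R N') + minner T1' N = c * q"
  proof -
    have dnphi: "((n \<circ> \<phi>) has_vector_derivative (p *\<^sub>R N')) (at s1)"
      using vector_diff_chain_at[OF dphiv] dN s_def by simp
    have ds: "((\<lambda>t. sinh (\<theta> t)) has_real_derivative (cosh (\<theta> s1) * q)) (at s1)"
      by (rule has_field_derivative_sinh[OF dtheta])
    have "minner (tang x1 s1) (p *\<^sub>R N') + minner T1' ((n \<circ> \<phi>) s1) = cosh (\<theta> s1) * q"
      by (rule deriv_eq_on_open[OF oI1 s1 _ minner_deriv[OF dT1 dnphi] ds]) (metis comp_apply frame)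
    then show ?thesis by (simp add: T1_def N_def s_def c_def)
  qed
  have fr: "minner T1 N = sh \<and> T1 = c *\<^sub>R T - sh *\<^sub>R N \<and> N1 = c *\<^sub>R N - sh *\<^sub>R T"
    unfolding T1_def N1_def T_def N_def s_def c_def sh_def by (rule frame[OF s1])
  have frA: "minner T1 N = sh" and frT1: "T1 = c *\<^sub>R T - sh *\<^sub>R N"
    and frN1: "N1 = c *\<^sub>R N - sh *\<^sub>R T" using fr by blast+
  have hT: "minner T T = 1" and hN: "minner N N = -1" and hNT: "minner N T = 0"
    using cI[OF sI] by (simp_all add: T_def N_def)
  have hTN: "minner T N = 0" using hNT by (simp add: minner_sym)
  have hT1: "minner T1 T1 = 1" and hN1: "minner N1 N1 = -1" and hNT1: "minner N1 T1 = 0"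
    using cI1[OF s1] by (simp_all add: T1_def N1_def)
  have Gdef: "G = lcross N T" by (simp add: G_def dgvec_def N_def T_def)
  have G1: "lcross N1 T1 = G" using bertrand[OF s1] by (simp add: dgvec_def N1_def T1_def G_def s_def)
  have hGN: "minner G N = 0" and hGT: "minner G T = 0" using lcross_orth[of N T] Gdef by simp_all
  have hcs: "c^2 - sh^2 = 1" using hyperbolic_pythagoras c_def sh_def by simp
  have cpos: "c > 0" using c_def by simp
  have kg: "geod_curv x n s = minner T' G" by (simp add: geod_curv_def T'_def G_def)
  have kn: "norm_curv x n s = - minner T' N" by (simp add: norm_curv_def T'_def N_def)
  have tg: "geod_tors x n s = - minner G' N" by (simp add: geod_tors_def G'_def N_def)
  have kg1: "geod_curv x1 n1 s1 = minner T1' G"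
    using bertrand[OF s1] by (simp add: geod_curv_def T1'_def G_def s_def)
  have kn1: "norm_curv x1 n1 s1 = - minner T1' N1" by (simp add: norm_curv_def T1'_def N1_def)
  have tg1: "geod_tors x1 n1 s1 = - minner G1' N1" by (simp add: geod_tors_def G1'_def N1_def)
  have E1: "minner G1' T1 = p * (c * minner G' T - sh * minner G' N)"
    unfolding F6 frT1 by (simp add: minner_lin algebra_simps)
  have E2: "minner G1' N1 = p * (c * minner G' N - sh * minner G' T)"
    unfolding F6 frN1 by (simp add: minner_lin algebra_simps)
  have E3: "minner T1 N' = c * minner T N' - sh * minner N N'"
    unfolding frT1 by (simp add: minner_lin)
  have E4: "minner T1' N = c * minner T1' N1"
  proof -
    have "T1' = minner T1' T1 *\<^sub>R T1 - minner T1' N1 *\<^sub>R N1 + minner T1' (lcross N1 T1) *\<^sub>R lcross N1 T1"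
      by (rule decomp[OF hT1 hN1 hNT1])
    then have "minner T1' N = minner T1' T1 * minner T1 N - minner T1' N1 * minner N1 N + minner T1' G * minner G N"
      using G1 by (metis minner_lin(1,2,3))
    moreover have "minner N1 N = - c" unfolding frN1 using hN hTN by (simp add: minner_lin)
    ultimately show ?thesis using F1 hGN by simp
  qed
  have a1: "minner G' T = - geod_curv x n s" using F2 kg by (simp add: minner_sym)
  have a2: "minner G1' T1 = - geod_curv x1 n1 s1" using F3 kg1 by (simp add: minner_sym)
  have a3: "minner T N' = norm_curv x n s" using F5 kn by (simp add: minner_sym)
  have a4: "minner N N' = 0" using F4 by (simp add: minner_sym)
  have kg1e: "geod_curv x1 n1 s1 = p * (c * geod_curv x n s - sh * geod_tors x n s)"
    using E1 a1 a2 tg by (simp add: algebra_simps)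
  have tg1e: "geod_tors x1 n1 s1 = p * (c * geod_tors x n s - sh * geod_curv x n s)"
    using E2 a1 tg1 tg by (simp add: algebra_simps)
  have "c * norm_curv x1 n1 s1 = c * (norm_curv x n s * p - q)"
    using F7 E3 E4 a3 a4 kn1 by (simp add: minner_lin algebra_simps)
  then have kn1e: "norm_curv x1 n1 s1 = norm_curv x n s * p - q" using cpos by simp
  have i2: "geod_tors x n s * p = geod_curv x1 n1 s1 * sh + geod_tors x1 n1 s1 * c"
  proof -
    have "geod_curv x1 n1 s1 * sh + geod_tors x1 n1 s1 * c = p * geod_tors x n s * (c^2 - sh^2)"
      unfolding kg1e tg1e by (simp add: algebra_simps power2_eq_square)
    then show ?thesis using hcs by simp
  qed
  have i3: "geod_curv x n s * p = geod_curv x1 n1 s1 * c + geod_tors x1 n1 s1 * sh"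
  proof -
    have "geod_curv x1 n1 s1 * c + geod_tors x1 n1 s1 * sh = p * geod_curv x n s * (c^2 - sh^2)"
      unfolding kg1e tg1e by (simp add: algebra_simps power2_eq_square)
    then show ?thesis using hcs by simp
  qed
  have tg1f: "geod_tors x1 n1 s1 = (- geod_curv x n s * sh + geod_tors x n s * c) * p"
    using tg1e by (simp add: algebra_simps)
  have "norm_curv x1 n1 s1 = norm_curv x n s * p - q
     \<and> geod_tors x n s * p = geod_curv x1 n1 s1 * sh + geod_tors x1 n1 s1 * c
     \<and> geod_curv x n s * p = geod_curv x1 n1 s1 * c + geod_tors x1 n1 s1 * sh
     \<and> geod_tors x1 n1 s1 = (- geod_curv x n s * sh + geod_tors x n s * c) * p"
    using kn1e i2 i3 tg1f by blast
  then show ?thesis by (simp only: s_def p_def q_def c_def sh_def)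
qed

end
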